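(* In the construction below, every nonempty $E^*\subseteq E$ with $|E^*| < st+2k$ satisfies $\beta(E^* ) > B$; in particular, no such $E^*$ is an admissible solution of the constructed CSCN instance.
   Context: Let $G'=(V',E')$ be a connected undirected graph, let $S=\{u_1,\dots,u_s\}\subseteq V'$ with $s=|S|$, and let $k\ge 0$ be a real number with $|E'|\ge 2k$. Let $t\ge 1$ be an integer. Let $V = V'\cup\{v_{i,j} : 1\le i\le s,\ 1\le j\le t\}$ (the $v_{i,j}$ are new vertices) and let $E$ be the set of all pairs of vertices of $V$ (edges undirected). Define $w^*:E\to\mathbb{R}$ by: $w^*(\{v_{i,j},u_i\})=1$ for all $i,j$; $w^*(\{v_{i,j},u\})=0$ for every $u\in V\setminus\{u_i\}$; $w^*(e)=\frac12$ for every $e\in E'$; $w^*(\{u,u'\})=0$ for $u,u'\in V'$ with $\{u,u'\}\notin E'$. Set $A=\frac{st+k}{st+2k}$ and $B=\frac{\frac12(|E'|-2k)}{st+2k}$. For nonempty $E^*\subseteq E$ let $\alpha(E^* )=\frac{\sum_{e\in E^*}w^*(e)}{|E^*|}$ and $\beta(E^* )=\frac{\sum_{e\in E\setminus E^*}w^*(e)}{|E^*|}$. The graph induced by $E^*$ has vertex set the vertices incident to some edge of $E^*$ and edge set $E^*$. An admissible solution of the constructed CSCN instance is a nonempty $E^*\subseteq E$ whose induced graph is connected and which satisfies $\alpha(E^* )\ge A$ and $\beta(E^* )\le B$. *)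

theory Defs
  imports Complex_Main
begin

definition simple_edges :: "'v set \<Rightarrow> 'v set set" where
  "simple_edges V = {{x, y} | x y. x \<in> V \<and> y \<in> V \<and> x \<noteq> y}"

definition adj_rel :: "'v set set \<Rightarrow> ('v \<times> 'v) set" where
  "adj_rel E = {(x, y). {x, y} \<in> E \<and> x \<noteq> y}"

definition graph_connected :: "'v set \<Rightarrow> 'v set set \<Rightarrow> bool" where
  "graph_connected V E \<longleftrightarrow> (\<forall>x\<in>V. \<forall>y\<in>V. (x, y) \<in> (adj_rel E)\<^sup>*)"

(* Construction: old vertices Inl v (v in V'), new vertices v_{i,j} = Inr (i,j);
   S = {u 1, ..., u s}. *)
definition cscn_V :: "'a set \<Rightarrow> nat \<Rightarrow> nat \<Rightarrow> ('a + nat \<times> nat) set" where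
  "cscn_V V' s t = Inl ` V' \<union> Inr ` ({1..s} \<times> {1..t})"

definition cscn_E :: "'a set \<Rightarrow> nat \<Rightarrow> nat \<Rightarrow> ('a + nat \<times> nat) set set" where
  "cscn_E V' s t = simple_edges (cscn_V V' s t)"

definition cscn_w :: "'a set set \<Rightarrow> (nat \<Rightarrow> 'a) \<Rightarrow> nat \<Rightarrow> nat \<Rightarrow> ('a + nat \<times> nat) set \<Rightarrow> real" where
  "cscn_w E' u s t e =
     (if \<exists>i\<in>{1..s}. \<exists>j\<in>{1..t}. e = {Inr (i, j), Inl (u i)} then 1
      else if \<exists>p. Inr p \<in> e then 0
      else if e \<in> (`) Inl ` E' then 1/2
      else 0)"

definition cscn_alpha :: "(('a + nat \<times> nat) set \<Rightarrow> real) \<Rightarrow> ('a + nat \<times> nat) set set \<Rightarrow> real" where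
  "cscn_alpha w Es = (\<Sum>e\<in>Es. w e) / real (card Es)"

definition cscn_beta :: "(('a + nat \<times> nat) set \<Rightarrow> real) \<Rightarrow> ('a + nat \<times> nat) set set
     \<Rightarrow> ('a + nat \<times> nat) set set \<Rightarrow> real" where
  "cscn_beta w E Es = (\<Sum>e\<in>E - Es. w e) / real (card Es)"

definition cscn_A :: "nat \<Rightarrow> nat \<Rightarrow> real \<Rightarrow> real" where
  "cscn_A s t k = (real (s * t) + k) / (real (s * t) + 2 * k)"

definition cscn_B :: "'a set set \<Rightarrow> nat \<Rightarrow> nat \<Rightarrow> real \<Rightarrow> real" where
  "cscn_B E' s t k = ((1/2) * (real (card E') - 2 * k)) / (real (s * t) + 2 * k)"

definition cscn_admissible ::
  "'a set \<Rightarrow> 'a set set \<Rightarrow> (nat \<Rightarrow> 'a) \<Rightarrow> nat \<Rightarrow> nat \<Rightarrow> real \<Rightarrow> ('a + nat \<times> nat) set set \<Rightarrow> bool" where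
  "cscn_admissible V' E' u s t k Es \<longleftrightarrow>
     Es \<noteq> {} \<and> Es \<subseteq> cscn_E V' s t \<and> graph_connected (\<Union>Es) Es \<and>
     cscn_alpha (cscn_w E' u s t) Es \<ge> cscn_A s t k \<and>
     cscn_beta (cscn_w E' u s t) (cscn_E V' s t) Es \<le> cscn_B E' s t k"

end

theory Submission
  imports Defs
begin

lemma w_bound:
  fixes E' :: "'a set set"
  shows "cscn_w E' u s t e \<le> 1/2 + (1/2) * (if e \<in> ((\<lambda>(i,j). {Inr (i,j), Inl (u i)}) ` ({1..s}\<times>{1..t}) :: ('a + nat \<times> nat) set set) then 1 else 0)"
  unfolding cscn_w_def by (auto simp: image_iff)

lemma w_nonneg: "cscn_w E' u s t e \<ge> 0"
  unfolding cscn_w_def by auto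

theorem lemma1:
  fixes V' :: "'a set" and E' :: "'a set set" and u :: "nat \<Rightarrow> 'a"
    and s t :: nat and k :: real
  assumes "finite V'"
    and "E' \<subseteq> simple_edges V'"
    and "graph_connected V' E'"
    and "inj_on u {1..s}"
    and "u ` {1..s} \<subseteq> V'"
    and "k \<ge> 0"
    and "real (card E') \<ge> 2 * k"
    and "t \<ge> 1"
  shows "\<forall>Es. Es \<noteq> {} \<and> Es \<subseteq> cscn_E V' s t \<and> real (card Es) < real (s * t) + 2 * k \<longrightarrow>
           cscn_beta (cscn_w E' u s t) (cscn_E V' s t) Es > cscn_B E' s t k \<and>
           \<not> cscn_admissible V' E' u s t k Es"
proof (intro allI impI)
  fix Es assume H: "Es \<noteq> {} \<and> Es \<subseteq> cscn_E V' s t \<and> real (card Es) < real (s * t) + 2 * k"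
  define w where "w = cscn_w E' u s t"
  define E where "E = cscn_E V' s t"
  define P :: "('a + nat \<times> nat) set set" where "P = (\<lambda>(i,j). {Inr (i,j), Inl (u i)}) ` ({1..s}\<times>{1..t})"
  define Q :: "('a + nat \<times> nat) set set" where "Q = (`) Inl ` E'"
  have finV: "finite (cscn_V V' s t)" using assms(1) unfolding cscn_V_def by auto
  have "E \<subseteq> Pow (cscn_V V' s t)" unfolding E_def cscn_E_def simple_edges_def by auto
  hence finE: "finite E" using finV by (simp add: finite_subset)
  have EsE: "Es \<subseteq> E" using H E_def by auto
  have finEs: "finite Es" using finE EsE by (simp add: finite_subset)
  define m where "m = real (card Es)"
  have mpos: "m > 0" using H finEs unfolding m_def by (simp add: card_gt_0_iff)
  have mlt: "m < real (s*t) + 2*k" using H m_def by simp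
  have finE': "finite E'"
  proof -
    have "E' \<subseteq> Pow V'" using assms(2) unfolding simple_edges_def by auto
    thus ?thesis using assms(1) by (simp add: finite_subset)
  qed
  have PE: "P \<subseteq> E"
  proof
    fix e assume "e \<in> P"
    then obtain i j where ij: "i \<in> {1..s}" "j \<in> {1..t}" "e = {Inr (i,j), Inl (u i)}"
      unfolding P_def by auto
    have "u i \<in> V'" using assms(5) ij by auto
    thus "e \<in> E" unfolding E_def cscn_E_def simple_edges_def cscn_V_def using ij by blast
  qed
  have QE: "Q \<subseteq> E"
  proof
    fix e assume "e \<in> Q"
    then obtain f where f: "f \<in> E'" "e = Inl ` f" unfolding Q_def by auto
    then obtain x y where "f = {x,y}" "x \<in> V'" "y \<in> V'" "x \<noteq> y"
      using assms(2) unfolding simple_edges_def by auto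
    thus "e \<in> E" using f unfolding E_def cscn_E_def simple_edges_def cscn_V_def by auto
  qed
  have PQ: "P \<inter> Q = {}" unfolding P_def Q_def by auto
  have injP: "inj_on (\<lambda>(i,j). {Inr (i,j), Inl (u i)} :: ('a + nat \<times> nat) set) ({1..s}\<times>{1..t})"
    by (auto simp: inj_on_def doubleton_eq_iff)
  have cardP: "card P = s * t" unfolding P_def using card_image[OF injP] by simp
  have injQ: "inj_on ((`) Inl :: 'a set \<Rightarrow> ('a + nat \<times> nat) set) E'"
    by (auto simp: inj_on_def inj_image_eq_iff)
  have cardQ: "card Q = card E'" unfolding Q_def using card_image[OF injQ] .
  have finP: "finite P" unfolding P_def by auto
  have finQ: "finite Q" unfolding Q_def using finE' by auto
  have wP: "\<And>e. e \<in> P \<Longrightarrow> w e = 1" unfolding w_def cscn_w_def P_def by auto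
  have wQ: "\<And>e. e \<in> Q \<Longrightarrow> w e = 1/2"
  proof -
    fix e assume "e \<in> Q"
    then obtain f where f: "f \<in> E'" "e = Inl ` f" unfolding Q_def by auto
    have "\<not> (\<exists>p. Inr p \<in> e)" using f by auto
    moreover have "\<not> (\<exists>i\<in>{1..s}. \<exists>j\<in>{1..t}. e = {Inr (i, j), Inl (u i)})" using f by auto
    ultimately show "w e = 1/2" unfolding w_def cscn_w_def using f by auto
  qed
  have "sum w E \<ge> sum w (P \<union> Q)"
    using PE QE finE by (intro sum_mono2) (auto simp: w_def w_nonneg)
  moreover have "sum w (P \<union> Q) = sum w P + sum w Q"
    using PQ finP finQ by (simp add: sum.union_disjoint)
  moreover have "sum w P = real (s*t)" using wP cardP by simp
  moreover have "sum w Q = real (card E') / 2" using sum.cong[OF refl wQ, of Q] cardQ by simp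
  ultimately have WE: "sum w E \<ge> real (s*t) + real (card E') / 2" by linarith
  have "sum w Es \<le> (\<Sum>e\<in>Es. 1/2 + (1/2) * (if e \<in> P then 1 else 0))"
    by (intro sum_mono) (unfold w_def P_def, rule w_bound)
  also have "\<dots> = m/2 + (1/2) * real (card (Es \<inter> P))"
  proof -
    have "(\<Sum>e\<in>Es. (if e \<in> P then 1 else 0)) = real (card (Es \<inter> P))"
      using finEs by (simp add: sum.If_cases)
    moreover have "(\<Sum>e\<in>Es. 1/2 + (1/2) * (if e \<in> P then 1 else 0)) = (\<Sum>e\<in>Es. (1/2::real)) + (1/2) * (\<Sum>e\<in>Es. (if e \<in> P then 1 else 0))"
      by (simp only: sum.distrib sum_distrib_left)
    ultimately show ?thesis by (simp add: m_def)
  qed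
  also have "card (Es \<inter> P) \<le> card P" using finP by (simp add: card_mono)
  hence "m/2 + (1/2) * real (card (Es \<inter> P)) \<le> m/2 + real (s*t)/2" using cardP by (simp del: of_nat_mult)
  finally have WEs: "sum w Es \<le> m/2 + real (s*t)/2" .
  have diff: "sum w (E - Es) = sum w E - sum w Es" using sum_diff[OF finE EsE] by simp
  define N where "N = real (s*t) + 2*k"
  define C where "C = real (s*t) + real (card E')"
  have Npos: "N > 0" using mpos mlt N_def by simp
  have CN: "C \<ge> N" using assms(7) N_def C_def by simp
  have low: "sum w (E - Es) \<ge> (C - m)/2" using diff WE WEs C_def by simp
  have "C / m > C / N" using mpos mlt CN Npos N_def
    by (intro divide_strict_left_mono) auto
  hence "(C - m)/(2*m) > (1/2)*(real (card E') - 2*k)/N"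
    using mpos Npos by (simp add: field_simps C_def N_def)
  moreover have "sum w (E - Es)/m \<ge> (C - m)/(2*m)"
  proof -
    have "(C - m)/(2*m) = ((C-m)/2)/m" by simp
    also have "\<dots> \<le> sum w (E - Es)/m" using low mpos by (intro divide_right_mono) auto
    finally show ?thesis .
  qed
  ultimately have gt: "sum w (E - Es)/m > (1/2)*(real (card E') - 2*k)/N" by linarith
  have B: "cscn_beta (cscn_w E' u s t) (cscn_E V' s t) Es > cscn_B E' s t k"
    using gt unfolding cscn_beta_def cscn_B_def w_def E_def m_def N_def by simp
  thus "cscn_beta (cscn_w E' u s t) (cscn_E V' s t) Es > cscn_B E' s t k \<and>
           \<not> cscn_admissible V' E' u s t k Es"
    unfolding cscn_admissible_def by auto
qed

end
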